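(* Let $P \subseteq \mathbb{R}^7$ be an associative $3$-plane. Then the two $\mathfrak{so}(3)$ subalgebras $\Lambda^2(P)$ and $\Psi(P)$ of $\Lambda^2(\mathbb{R}^7)$ commute: if $X \in \Lambda^2(P)$ and $Y \in \Psi(P)$ then $[X,Y] = 0$.
   Context: Equip $\mathbb{R}^7$ with its standard inner product, orientation and basis. Let $\varphi = e_{123} - e_{167} - e_{527} - e_{563} - e_{415} - e_{426} - e_{437}$ ($e_{ijk} = e_i\wedge e_j\wedge e_k$), $\psi = \star\varphi = e_{4567} - e_{4523} - e_{4163} - e_{4127} - e_{2637} - e_{1537} - e_{1526}$, and define $\times$ by $\langle u \times v, w \rangle = \varphi(u,v,w)$. A $3$-dimensional subspace is associative if closed under $\times$. For $u,v$: $u\wedge v$ is the 2-form $(a,b)\mapsto \langle u,a\rangle\langle v,b\rangle - \langle u,b\rangle\langle v,a\rangle$, and $\Psi_{uv}$ is the 2-form $(a,b)\mapsto\psi(u,v,a,b)$. $\Lambda^2(P) = \mathrm{Span}\{u\wedge v: u,v\in P\}$, $\Psi(P) = \mathrm{Span}\{\Psi_{uv} : u,v\in P\}$. Skew bilinear forms are identified with skew-adjoint operators via $X(a,b) = \langle X(a),b\rangle$, and the bracket is the commutator. *)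

theory Defs
  imports "HOL-Analysis.Analysis"
begin

text \<open>R^7 is real^7. The standard basis vector e_i (i = 1..7) is the i-th coordinate;
  coordinate i is stored at index (of_nat i :: 7), a bijection {1..7} -> UNIV.\<close>

definition comp7 :: "real^7 \<Rightarrow> nat \<Rightarrow> real" where
  "comp7 x i = x $ (of_nat i :: 7)"

text \<open>Elementary k-form e_{i1...ik} evaluated on vectors v_1..v_k:
  det [ (v_a)_{i_b} ].\<close>
definition eform :: "nat list \<Rightarrow> (real^7) list \<Rightarrow> real" where
  "eform I vs = (\<Sum>p | p permutes {..<length I}.
      of_int (sign p) * (\<Prod>m<length I. comp7 (vs ! (p m)) (I ! m)))"

definition phi :: "real^7 \<Rightarrow> real^7 \<Rightarrow> real^7 \<Rightarrow> real" where
  "phi u v w = (let vs = [u, v, w] in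
     eform [1,2,3] vs - eform [1,6,7] vs - eform [5,2,7] vs - eform [5,6,3] vs
     - eform [4,1,5] vs - eform [4,2,6] vs - eform [4,3,7] vs)"

definition psi :: "real^7 \<Rightarrow> real^7 \<Rightarrow> real^7 \<Rightarrow> real^7 \<Rightarrow> real" where
  "psi u v a b = (let vs = [u, v, a, b] in
     eform [4,5,6,7] vs - eform [4,5,2,3] vs - eform [4,1,6,3] vs - eform [4,1,2,7] vs
     - eform [2,6,3,7] vs - eform [1,5,3,7] vs - eform [1,5,2,6] vs)"

text \<open>Cross product: <u x v, w> = phi(u,v,w).\<close>
definition cross7 :: "real^7 \<Rightarrow> real^7 \<Rightarrow> real^7" where
  "cross7 u v = (\<chi> i. phi u v (axis i 1))"

definition associative :: "(real^7) set \<Rightarrow> bool" where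
  "associative P \<longleftrightarrow> subspace P \<and> dim P = 3 \<and> (\<forall>u\<in>P. \<forall>v\<in>P. cross7 u v \<in> P)"

definition wedge2 :: "real^7 \<Rightarrow> real^7 \<Rightarrow> real^7 \<Rightarrow> real^7 \<Rightarrow> real" where
  "wedge2 u v a b = (u \<bullet> a) * (v \<bullet> b) - (u \<bullet> b) * (v \<bullet> a)"

definition Psi2 :: "real^7 \<Rightarrow> real^7 \<Rightarrow> real^7 \<Rightarrow> real^7 \<Rightarrow> real" where
  "Psi2 u v a b = psi u v a b"

text \<open>Identification of a bilinear form B with the operator X given by
  B(a,b) = <X a, b>, represented as a matrix (X a = M *v a).\<close>
definition form_op :: "(real^7 \<Rightarrow> real^7 \<Rightarrow> real) \<Rightarrow> real^7^7" where
  "form_op B = (\<chi> j k. B (axis k 1) (axis j 1))"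

definition Lambda2 :: "(real^7) set \<Rightarrow> (real^7^7) set" where
  "Lambda2 P = span {form_op (wedge2 u v) | u v. u \<in> P \<and> v \<in> P}"

definition PsiP :: "(real^7) set \<Rightarrow> (real^7^7) set" where
  "PsiP P = span {form_op (Psi2 u v) | u v. u \<in> P \<and> v \<in> P}"

definition bracket :: "real^7^7 \<Rightarrow> real^7^7 \<Rightarrow> real^7^7" where
  "bracket X Y = X ** Y - Y ** X"

end

theory Submission
  imports Defs "HOL-Combinatorics.Permutations"
begin


lemma eform3: "eform [i,j,k] [a,b,c] =
  comp7 a i * comp7 b j * comp7 c k - comp7 b i * comp7 a j * comp7 c k
 - comp7 c i * comp7 b j * comp7 a k - comp7 a i * comp7 c j * comp7 b k
 + comp7 b i * comp7 c j * comp7 a k + comp7 c i * comp7 a j * comp7 b k"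
proof -
  have e: "{..<length [i,j,k]} = insert 0 (insert 1 (insert (2::nat) {}))" by auto
  have f1: "finite {1, 2::nat}" "0 \<notin> {1, 2::nat}" by auto
  have f2: "finite {2::nat}" "1 \<notin> {2::nat}" by auto
  show ?thesis
    unfolding eform_def e
    unfolding sum_over_permutations_insert[OF f1]
    unfolding sum_over_permutations_insert[OF f2]
    unfolding permutes_sing
    by (simp add: sign_swap_id permutation_swap_id sign_compose permutation_compose sign_id swap_id_eq lessThan_Suc numeral_eq_Suc algebra_simps)
qed

lemma eform4: "eform [i,j,k,l] [a,b,c,d] = comp7 a i * comp7 b j * comp7 c k * comp7 d l - comp7 a i * comp7 b j * comp7 d k * comp7 c l - comp7 a i * comp7 c j * comp7 b k * comp7 d l + comp7 a i * comp7 c j * comp7 d k * comp7 b l + comp7 a i * comp7 d j * comp7 b k * comp7 c l - comp7 a i * comp7 d j * comp7 c k * comp7 b l - comp7 b i * comp7 a j * comp7 c k * comp7 d l + comp7 b i * comp7 a j * comp7 d k * comp7 c l + comp7 b i * comp7 c j * comp7 a k * comp7 d l - comp7 b i * comp7 c j * comp7 d k * comp7 a l - comp7 b i * comp7 d j * comp7 a k * comp7 c l + comp7 b i * comp7 d j * comp7 c k * comp7 a l + comp7 c i * comp7 a j * comp7 b k * comp7 d l - comp7 c i * comp7 a j * comp7 d k * comp7 b l - comp7 c i * comp7 b j * comp7 a k * comp7 d l + comp7 c i * comp7 b j * comp7 d k * comp7 a l + comp7 c i * comp7 d j * comp7 a k * comp7 b l - comp7 c i * comp7 d j * comp7 b k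 * comp7 a l - comp7 d i * comp7 a j * comp7 b k * comp7 c l + comp7 d i * comp7 a j * comp7 c k * comp7 b l + comp7 d i * comp7 b j * comp7 a k * comp7 c l - comp7 d i * comp7 b j * comp7 c k * comp7 a l - comp7 d i * comp7 c j * comp7 a k * comp7 b l + comp7 d i * comp7 c j * comp7 b k * comp7 a l"
proof -
  have e: "{..<length [i,j,k,l]} = insert 0 (insert 1 (insert 2 (insert (3::nat) {})))" by auto
  have f1: "finite {1, 2, 3::nat}" "0 \<notin> {1, 2, 3::nat}" by auto
  have f2: "finite {2, 3::nat}" "1 \<notin> {2, 3::nat}" by auto
  have f3: "finite {3::nat}" "2 \<notin> {3::nat}" by auto
  show ?thesis
    unfolding eform_def e
    unfolding sum_over_permutations_insert[OF f1]
    unfolding sum_over_permutations_insert[OF f2]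
    unfolding sum_over_permutations_insert[OF f3]
    unfolding permutes_sing
    by (simp add: sign_swap_id permutation_swap_id sign_compose permutation_compose sign_id swap_id_eq lessThan_Suc numeral_eq_Suc algebra_simps)
qed

lemma cross7_comp:
  "cross7 u v $ 1 = u $ 2 * v $ 3 - u $ 3 * v $ 2 + u $ 4 * v $ 5 - u $ 5 * v $ 4 - u $ 6 * v $ 7 + u $ 7 * v $ 6"
  "cross7 u v $ 2 = - u $ 1 * v $ 3 + u $ 3 * v $ 1 + u $ 4 * v $ 6 + u $ 5 * v $ 7 - u $ 6 * v $ 4 - u $ 7 * v $ 5"
  "cross7 u v $ 3 = u $ 1 * v $ 2 - u $ 2 * v $ 1 + u $ 4 * v $ 7 - u $ 5 * v $ 6 + u $ 6 * v $ 5 - u $ 7 * v $ 4"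
  "cross7 u v $ 4 = - u $ 1 * v $ 5 - u $ 2 * v $ 6 - u $ 3 * v $ 7 + u $ 5 * v $ 1 + u $ 6 * v $ 2 + u $ 7 * v $ 3"
  "cross7 u v $ 5 = u $ 1 * v $ 4 - u $ 2 * v $ 7 + u $ 3 * v $ 6 - u $ 4 * v $ 1 - u $ 6 * v $ 3 + u $ 7 * v $ 2"
  "cross7 u v $ 6 = u $ 1 * v $ 7 + u $ 2 * v $ 4 - u $ 3 * v $ 5 - u $ 4 * v $ 2 + u $ 5 * v $ 3 - u $ 7 * v $ 1"
  "cross7 u v $ 7 = - u $ 1 * v $ 6 + u $ 2 * v $ 5 + u $ 3 * v $ 4 - u $ 4 * v $ 3 - u $ 5 * v $ 2 + u $ 6 * v $ 1"
  by (simp_all add: cross7_def phi_def eform3 comp7_def axis_def)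

lemma key0: "psi u v (cross7 u v) w = 0"
  unfolding psi_def Let_def eform4 comp7_def
  apply (simp add: cross7_comp del: vector_add_component vector_minus_component)
  by algebra

lemma psi_add1: "psi (x + y) b c d = psi x b c d + psi y b c d"
  apply (simp only: psi_def Let_def eform4 comp7_def vector_add_component)
  by algebra
lemma psi_add2: "psi a (x + y) c d = psi a x c d + psi a y c d"
  apply (simp only: psi_def Let_def eform4 comp7_def vector_add_component)
  by algebra
lemma psi_add3: "psi a b (x + y) d = psi a b x d + psi a b y d"
  apply (simp only: psi_def Let_def eform4 comp7_def vector_add_component)
  by algebra
lemma psi_add4: "psi a b c (x + y) = psi a b c x + psi a b c y"
  apply (simp only: psi_def Let_def eform4 comp7_def vector_add_component)
  by algebra
lemma psi_scale1: "psi (r *\<^sub>R x) b c d = r * psi x b c d"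
  apply (simp only: psi_def Let_def eform4 comp7_def vector_scaleR_component real_scaleR_def)
  by algebra
lemma psi_scale2: "psi a (r *\<^sub>R x) c d = r * psi a x c d"
  apply (simp only: psi_def Let_def eform4 comp7_def vector_scaleR_component real_scaleR_def)
  by algebra
lemma psi_scale3: "psi a b (r *\<^sub>R x) d = r * psi a b x d"
  apply (simp only: psi_def Let_def eform4 comp7_def vector_scaleR_component real_scaleR_def)
  by algebra
lemma psi_scale4: "psi a b c (r *\<^sub>R x) = r * psi a b c x"
  apply (simp only: psi_def Let_def eform4 comp7_def vector_scaleR_component real_scaleR_def)
  by algebra
lemma psi_swap12: "psi b a c d = - psi a b c d"
  unfolding psi_def Let_def eform4 comp7_def by algebra
lemma psi_swap23: "psi a c b d = - psi a b c d"
  unfolding psi_def Let_def eform4 comp7_def by algebra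
lemma psi_swap34: "psi a b d c = - psi a b c d"
  unfolding psi_def Let_def eform4 comp7_def by algebra
lemma psi_aa: "psi a a c d = 0"
  unfolding psi_def Let_def eform4 comp7_def by algebra
lemma psi_a_a: "psi a b a d = 0"
  unfolding psi_def Let_def eform4 comp7_def by algebra
lemma psi_bb: "psi a b b d = 0"
  unfolding psi_def Let_def eform4 comp7_def by algebra

lemma D7: "distinct [1,2,3,4,5,6,7::7]" by simp
lemma UNIV7: "(UNIV::7 set) = set [1,2,3,4,5,6,7]"
proof -
  have "card (set [1,2,3,4,5,6,7::7]) = 7" using D7 by (simp only: distinct_card) simp
  then have "card (set [1,2,3,4,5,6,7::7]) = CARD(7)" by simp
  then show ?thesis using card_subset_eq[of UNIV "set [1,2,3,4,5,6,7::7]"] by auto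
qed
lemma inner7: "x \<bullet> (y::real^7) = x$1*y$1 + x$2*y$2 + x$3*y$3 + x$4*y$4 + x$5*y$5 + x$6*y$6 + x$7*y$7"
  unfolding inner_vec_def UNIV7 sum.distinct_set_conv_list[OF D7] by simp

lemma cross_orth1: "cross7 u v \<bullet> u = 0"
  unfolding inner7 cross7_comp by algebra
lemma cross_orth2: "cross7 u v \<bullet> v = 0"
  unfolding inner7 cross7_comp by algebra
lemma cross_norm: "cross7 u v \<bullet> cross7 u v = (u \<bullet> u) * (v \<bullet> v) - (u \<bullet> v)^2"
  unfolding inner7 cross7_comp by algebra


lemma lin1: "linear (\<lambda>x. psi x b c d)"
  by (rule linearI) (simp_all add: psi_add1 psi_scale1)
lemma lin2: "linear (\<lambda>x. psi a x c d)"
  by (rule linearI) (simp_all add: psi_add2 psi_scale2)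
lemma lin3: "linear (\<lambda>x. psi a b x d)"
  by (rule linearI) (simp_all add: psi_add3 psi_scale3)
lemma lin4: "linear (\<lambda>x. psi a b c x)"
  by (rule linearI) (simp_all add: psi_add4 psi_scale4)

lemma psi_span:
  assumes S: "\<And>x y z. x \<in> S \<Longrightarrow> y \<in> S \<Longrightarrow> z \<in> S \<Longrightarrow> psi x y z w = 0"
    and a: "a \<in> span S" and b: "b \<in> span S" and c: "c \<in> span S"
  shows "psi a b c w = 0"
proof -
  have 1: "psi a y z w = 0" if "y \<in> S" "z \<in> S" for y z
    by (rule linear_eq_0_on_span[OF lin1 _ a]) (rule S[OF _ that])
  have 2: "psi a b z w = 0" if "z \<in> S" for z
    by (rule linear_eq_0_on_span[OF lin2 _ b]) (rule 1[OF _ that])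
  show ?thesis
    by (rule linear_eq_0_on_span[OF lin3 _ c]) (rule 2)
qed

lemma psi_triple:
  assumes "x \<in> {u, v, cross7 u v}" "y \<in> {u, v, cross7 u v}" "z \<in> {u, v, cross7 u v}"
  shows "psi x y z w = 0"
proof -
  have k1: "psi u v (cross7 u v) w = 0" by (rule key0)
  have k2: "psi v u (cross7 u v) w = 0" using k1 psi_swap12[of u v] by simp
  have k3: "psi u (cross7 u v) v w = 0" using k1 psi_swap23[of u v "cross7 u v"] by simp
  have k4: "psi v (cross7 u v) u w = 0" using k2 psi_swap23[of v u "cross7 u v"] by simp
  have k5: "psi (cross7 u v) u v w = 0" using k3 psi_swap12[of u "cross7 u v"] by simp
  have k6: "psi (cross7 u v) v u w = 0" using k4 psi_swap12[of v "cross7 u v"] by simp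
  from assms have "(x = u \<or> x = v \<or> x = cross7 u v) \<and> (y = u \<or> y = v \<or> y = cross7 u v) \<and> (z = u \<or> z = v \<or> z = cross7 u v)"
    by (simp only: insert_iff empty_iff simp_thms)
  then show ?thesis
    by (elim conjE disjE) (simp_all only: k1 k2 k3 k4 k5 k6 psi_aa psi_a_a psi_bb)
qed

lemma assoc_span:
  assumes "associative P"
  obtains u v where "u \<in> P" "v \<in> P" "P \<subseteq> span {u, v, cross7 u v}"
proof -
  have sub: "subspace P" and d: "dim P = 3" and cl: "\<And>u v. u \<in> P \<Longrightarrow> v \<in> P \<Longrightarrow> cross7 u v \<in> P"
    using assms unfolding associative_def by auto
  obtain B where BP: "B \<subseteq> P" and orth: "pairwise orthogonal B" and n1: "\<And>x. x \<in> B \<Longrightarrow> norm x = 1"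
    and cB: "card B = dim P" and sB: "span B = P"
    using orthonormal_basis_subspace[OF sub] by metis
  from cB d obtain u v w where B: "B = {u, v, w}" and uv: "u \<noteq> v" and vw: "v \<noteq> w" and uw: "u \<noteq> w"
    by (auto simp: card_3_iff)
  have uu: "u \<bullet> u = 1" and vv: "v \<bullet> v = 1" using n1 B by (auto simp: norm_eq_1)
  have uv0: "u \<bullet> v = 0" "u \<bullet> w = 0" "v \<bullet> w = 0"
    using orth B uv vw uw unfolding pairwise_def orthogonal_def by auto
  define c where "c = cross7 u v"
  have cP: "c \<in> P" using cl BP B c_def by auto
  have cc: "c \<bullet> c = 1" using cross_norm[of u v] uu vv uv0 c_def by simp
  have cu: "c \<bullet> u = 0" and cv: "c \<bullet> v = 0" using cross_orth1 cross_orth2 c_def by auto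
  have "c \<in> span (insert w {u, v})" using cP sB B by (simp add: insert_commute)
  then obtain k where k: "c - k *\<^sub>R w \<in> span {u, v}"
    unfolding span_insert by auto
  have "k \<noteq> 0"
  proof
    assume "k = 0"
    then have "c \<in> span {u, v}" using k by simp
    moreover have "(\<lambda>x. c \<bullet> x) x = 0" if "x \<in> {u, v}" for x
      using that cu cv by (auto simp: inner_commute)
    moreover have lin: "linear (\<lambda>x. c \<bullet> x)" by (rule bounded_linear.linear[OF bounded_linear_inner_right])
    ultimately have "c \<bullet> c = 0"
      using linear_eq_0_on_span[OF lin] by blast
    then show False using cc by simp
  qed
  have "w \<in> span {u, v, c}"
  proof -
    have s1: "c - k *\<^sub>R w \<in> span {u, v, c}" using k span_mono[of "{u, v}" "{u, v, c}"] by auto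
    have s2: "c \<in> span {u, v, c}" by (simp add: span_base)
    have "k *\<^sub>R w \<in> span {u, v, c}" using span_diff[OF s2 s1] by simp
    then have "(1 / k) *\<^sub>R (k *\<^sub>R w) \<in> span {u, v, c}" by (rule span_mul)
    then show ?thesis using \<open>k \<noteq> 0\<close> by simp
  qed
  then have "B \<subseteq> span {u, v, c}" using B by (auto simp: span_base)
  then have "P \<subseteq> span {u, v, c}" using sB span_minimal[OF _ subspace_span] by metis
  then show ?thesis using that BP B c_def by auto
qed

lemma assoc_psi0:
  assumes "associative P" "a \<in> P" "b \<in> P" "c \<in> P"
  shows "psi a b c w = 0"
proof -
  obtain u v where "P \<subseteq> span {u, v, cross7 u v}" using assoc_span[OF assms(1)] by metis
  then have "a \<in> span {u, v, cross7 u v}" "b \<in> span {u, v, cross7 u v}" "c \<in> span {u, v, cross7 u v}"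
    using assms by auto
  then show ?thesis
    by (rule psi_span[where S="{u, v, cross7 u v}", rotated]) (rule psi_triple)
qed


lemma psi_expand4: "(\<Sum>j\<in>UNIV. x$j * psi a b c (axis j 1)) = psi a b c x"
proof -
  have "psi a b c x = psi a b c (\<Sum>j\<in>UNIV. x$j *\<^sub>R axis j 1)"
    using basis_expansion[of x] by (simp add: scalar_mult_eq_scaleR)
  also have "\<dots> = (\<Sum>j\<in>UNIV. x$j * psi a b c (axis j 1))"
    by (simp add: linear_sum[OF lin4] psi_scale4)
  finally show ?thesis by simp
qed

lemma psi_expand3: "(\<Sum>j\<in>UNIV. x$j * psi a b (axis j 1) d) = psi a b x d"
proof -
  have "psi a b x d = psi a b (\<Sum>j\<in>UNIV. x$j *\<^sub>R axis j 1) d"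
    using basis_expansion[of x] by (simp add: scalar_mult_eq_scaleR)
  also have "\<dots> = (\<Sum>j\<in>UNIV. x$j * psi a b (axis j 1) d)"
    by (simp add: linear_sum[OF lin3] psi_scale3)
  finally show ?thesis by simp
qed

lemma gen_zero:
  assumes u: "\<And>w. psi a b u w = 0" and v: "\<And>w. psi a b v w = 0"
  shows "bracket (form_op (wedge2 u v)) (form_op (Psi2 a b)) = 0"
proof -
  have A: "(form_op (wedge2 u v) ** form_op (Psi2 a b)) $ i $ k = 0" for i k
  proof -
    have "(form_op (wedge2 u v) ** form_op (Psi2 a b)) $ i $ k
        = (\<Sum>j\<in>UNIV. (u$j * v$i - u$i * v$j) * psi a b (axis k 1) (axis j 1))"
      by (simp add: matrix_matrix_mult_def form_op_def wedge2_def Psi2_def inner_axis)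
    also have "\<dots> = v$i * (\<Sum>j\<in>UNIV. u$j * psi a b (axis k 1) (axis j 1))
                    - u$i * (\<Sum>j\<in>UNIV. v$j * psi a b (axis k 1) (axis j 1))"
      by (simp add: left_diff_distrib sum_subtractf sum_distrib_left algebra_simps)
    also have "\<dots> = v$i * psi a b (axis k 1) u - u$i * psi a b (axis k 1) v"
      by (simp only: psi_expand4)
    also have "\<dots> = 0"
      using psi_swap34[of a b u "axis k 1"] psi_swap34[of a b v "axis k 1"] u v by simp
    finally show ?thesis .
  qed
  have B: "(form_op (Psi2 a b) ** form_op (wedge2 u v)) $ i $ k = 0" for i k
  proof -
    have "(form_op (Psi2 a b) ** form_op (wedge2 u v)) $ i $ k
        = (\<Sum>j\<in>UNIV. psi a b (axis j 1) (axis i 1) * (u$k * v$j - u$j * v$k))"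
      by (simp add: matrix_matrix_mult_def form_op_def wedge2_def Psi2_def inner_axis)
    also have "\<dots> = u$k * (\<Sum>j\<in>UNIV. v$j * psi a b (axis j 1) (axis i 1))
                    - v$k * (\<Sum>j\<in>UNIV. u$j * psi a b (axis j 1) (axis i 1))"
      by (simp add: right_diff_distrib sum_subtractf sum_distrib_left algebra_simps)
    also have "\<dots> = u$k * psi a b v (axis i 1) - v$k * psi a b u (axis i 1)"
      by (simp only: psi_expand3)
    also have "\<dots> = 0"
      using u v by simp
    finally show ?thesis .
  qed
  show ?thesis
    unfolding bracket_def by (simp add: vec_eq_iff A B)
qed

lemma matrix_add_rdistrib7: "((A::real^7^7) + B) ** C = A ** C + B ** C"
  by (simp add: vec_eq_iff matrix_matrix_mult_def sum.distrib algebra_simps)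

lemma brlin1: "linear (\<lambda>X. bracket X Y)"
  by (rule linearI)
     (simp_all add: bracket_def matrix_add_rdistrib7 matrix_add_ldistrib scalar_matrix_assoc[symmetric]
        matrix_scalar_ac scaleR_diff_right)

lemma brlin2: "linear (\<lambda>Y. bracket X Y)"
  by (rule linearI)
     (simp_all add: bracket_def matrix_add_rdistrib7 matrix_add_ldistrib scalar_matrix_assoc[symmetric]
        matrix_scalar_ac scaleR_diff_right)

theorem proposition4p7:
  fixes P :: "(real^7) set" and X Y :: "real^7^7"
  assumes "associative P"
    and "X \<in> Lambda2 P"
    and "Y \<in> PsiP P"
  shows "bracket X Y = 0"
proof -
  have g: "bracket g Y = 0" if "g \<in> {form_op (wedge2 u v) | u v. u \<in> P \<and> v \<in> P}" for g
  proof -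
    from that obtain u v where g: "g = form_op (wedge2 u v)" and uv: "u \<in> P" "v \<in> P" by blast
    have "bracket g h = 0" if "h \<in> {form_op (Psi2 a b) | a b. a \<in> P \<and> b \<in> P}" for h
    proof -
      from that obtain a b where h: "h = form_op (Psi2 a b)" and ab: "a \<in> P" "b \<in> P" by blast
      show ?thesis unfolding g h
        by (rule gen_zero) (rule assoc_psi0[OF assms(1) ab uv(1)], rule assoc_psi0[OF assms(1) ab uv(2)])
    qed
    then show ?thesis
      by (rule linear_eq_0_on_span[OF brlin2 _ assms(3)[unfolded PsiP_def]])
  qed
  show ?thesis
    by (rule linear_eq_0_on_span[OF brlin1 _ assms(2)[unfolded Lambda2_def]]) (rule g)
qed
end
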